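(* Let $X_1,\dots,X_n$ be statistically compact topological spaces. Then the product space $\prod_{i=1}^n X_i$ is statistically compact.
   Context: For $A\subseteq\mathbb{N}$ let $d_n(A)=|A\cap\{1,\dots,n\}|/n$, $\overline{d}(A)=\limsup_n d_n(A)$, $\underline{d}(A)=\liminf_n d_n(A)$, and $d(A)$ their common value when equal. A sequence in $X$ is a map from an infinite subset $M\subseteq\mathbb{N}$ into $X$, written $(x_n)_{n\in M}$; a subsequence is $(x_n)_{n\in N}$ with $N\subseteq M$ infinite. It is nonthin if $\overline{d}(M)>0$. A nonthin sequence $(x_n)_{n\in M}$ is statistically convergent to $a\in X$ if for every open $U\ni a$, $d(\{n\in M:x_n\notin U\})=0$. A topological space is statistically compact if every nonthin sequence in it has a nonthin subsequence that is statistically convergent to some point of the space. *)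

theory Defs
  imports "HOL-Analysis.Analysis"
begin

text \<open>Natural numbers of the paper are the positive integers; d_n(A) = |A \<inter> {1..n}| / n.\<close>

definition dens_n :: "nat set \<Rightarrow> nat \<Rightarrow> real" where
  "dens_n A n = real (card (A \<inter> {1..n})) / real n"

definition upper_density :: "nat set \<Rightarrow> ereal" where
  "upper_density A = limsup (\<lambda>n. ereal (dens_n A n))"

definition has_density :: "nat set \<Rightarrow> real \<Rightarrow> bool" where
  "has_density A a \<longleftrightarrow> (\<lambda>n. dens_n A n) \<longlonglongrightarrow> a"

definition nonthin :: "nat set \<Rightarrow> bool" where
  "nonthin M \<longleftrightarrow> upper_density M > 0"

definition is_seq_in :: "'a topology \<Rightarrow> nat set \<Rightarrow> (nat \<Rightarrow> 'a) \<Rightarrow> bool" where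
  "is_seq_in X M x \<longleftrightarrow> M \<subseteq> {1..} \<and> infinite M \<and> (\<forall>n\<in>M. x n \<in> topspace X)"

definition stat_converges :: "'a topology \<Rightarrow> nat set \<Rightarrow> (nat \<Rightarrow> 'a) \<Rightarrow> 'a \<Rightarrow> bool" where
  "stat_converges X M x a \<longleftrightarrow> nonthin M \<and> a \<in> topspace X \<and>
     (\<forall>U. openin X U \<and> a \<in> U \<longrightarrow> has_density {n\<in>M. x n \<notin> U} 0)"

definition stat_compact :: "'a topology \<Rightarrow> bool" where
  "stat_compact X \<longleftrightarrow> (\<forall>M x. is_seq_in X M x \<and> nonthin M \<longrightarrow>
     (\<exists>N. N \<subseteq> M \<and> infinite N \<and> nonthin N \<and> (\<exists>a\<in>topspace X. stat_converges X N x a)))"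

end

theory Submission
  imports Defs
begin

lemma dens_nonneg: "dens_n A n \<ge> 0"
  by (simp add: dens_n_def)

lemma dens_mono: "A \<subseteq> B \<Longrightarrow> dens_n A n \<le> dens_n B n"
  unfolding dens_n_def
  by (intro divide_right_mono) (auto intro!: card_mono)

lemma dens_Un: "dens_n (A \<union> B) n \<le> dens_n A n + dens_n B n"
proof -
  have "card ((A \<union> B) \<inter> {1..n}) \<le> card (A \<inter> {1..n}) + card (B \<inter> {1..n})"
    by (metis Int_Un_distrib2 card_Un_le)
  then show ?thesis unfolding dens_n_def
    by (simp add: add_divide_distrib[symmetric] divide_right_mono)
qed

lemma dens0_subset:
  assumes "has_density B 0" "A \<subseteq> B" shows "has_density A 0"
proof -
  have "\<forall>\<^sub>F n in sequentially. (\<lambda>_. 0) n \<le> dens_n A n" by (simp add: dens_nonneg)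
  moreover have "\<forall>\<^sub>F n in sequentially. dens_n A n \<le> dens_n B n" using assms(2) by (simp add: dens_mono)
  moreover have "(\<lambda>_. 0::real) \<longlonglongrightarrow> 0" by simp
  moreover have "(\<lambda>n. dens_n B n) \<longlonglongrightarrow> 0" using assms(1) by (simp add: has_density_def)
  ultimately show ?thesis unfolding has_density_def by (rule tendsto_sandwich)
qed

lemma dens0_Un:
  assumes "has_density A 0" "has_density B 0" shows "has_density (A \<union> B) 0"
proof -
  have "(\<lambda>n. dens_n A n + dens_n B n) \<longlonglongrightarrow> 0 + 0"
    using assms unfolding has_density_def by (intro tendsto_add)
  then have h: "(\<lambda>n. dens_n A n + dens_n B n) \<longlonglongrightarrow> 0" by simp
  have "\<forall>\<^sub>F n in sequentially. (\<lambda>_. 0) n \<le> dens_n (A \<union> B) n" by (simp add: dens_nonneg)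
  moreover have "\<forall>\<^sub>F n in sequentially. dens_n (A \<union> B) n \<le> dens_n A n + dens_n B n" by (simp add: dens_Un)
  moreover have "(\<lambda>_. 0::real) \<longlonglongrightarrow> 0" by simp
  ultimately show ?thesis unfolding has_density_def using h by (rule tendsto_sandwich)
qed

lemma dens0_empty: "has_density {} 0"
  by (simp add: has_density_def dens_n_def)

lemma dens0_UN:
  assumes "finite J" "\<And>i. i \<in> J \<Longrightarrow> has_density (A i) 0"
  shows "has_density (\<Union>i\<in>J. A i) 0"
  using assms by (induction J rule: finite_induct) (auto intro: dens0_Un dens0_empty)

lemma stat_conv_sub:
  assumes "stat_converges X N x a" "N' \<subseteq> N" "nonthin N'"
  shows "stat_converges X N' x a"
  using assms unfolding stat_converges_def
proof (intro conjI allI impI)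
  fix U assume U: "openin X U \<and> a \<in> U"
  have "has_density {n \<in> N. x n \<notin> U} 0" using assms U unfolding stat_converges_def by blast
  moreover have "{n \<in> N'. x n \<notin> U} \<subseteq> {n \<in> N. x n \<notin> U}" using assms by auto
  ultimately show "has_density {n \<in> N'. x n \<notin> U} 0" by (rule dens0_subset)
qed auto

lemma coords:
  assumes "finite J" "\<And>i. i \<in> J \<Longrightarrow> stat_compact (X i)"
    "M \<subseteq> {1..}" "infinite M" "nonthin M" "\<And>m i. m \<in> M \<Longrightarrow> i \<in> J \<Longrightarrow> x m i \<in> topspace (X i)"
  shows "\<exists>N\<subseteq>M. infinite N \<and> nonthin N \<and>
     (\<forall>i\<in>J. \<exists>a\<in>topspace (X i). stat_converges (X i) N (\<lambda>m. x m i) a)"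
  using assms
proof (induction J rule: finite_induct)
  case empty
  then show ?case by blast
next
  case (insert j J)
  have "\<exists>N\<subseteq>M. infinite N \<and> nonthin N \<and>
     (\<forall>i\<in>J. \<exists>a\<in>topspace (X i). stat_converges (X i) N (\<lambda>m. x m i) a)"
    using insert.IH insert.prems by simp
  then obtain N where N: "N \<subseteq> M" "infinite N" "nonthin N"
    "\<forall>i\<in>J. \<exists>a\<in>topspace (X i). stat_converges (X i) N (\<lambda>m. x m i) a"
    by blast
  have seq: "is_seq_in (X j) N (\<lambda>m. x m j)"
    unfolding is_seq_in_def
  proof (intro conjI ballI)
    show "N \<subseteq> {1..}" using N(1) insert.prems(2) by (rule order_trans)
    show "infinite N" by fact
    fix m assume "m \<in> N" then show "x m j \<in> topspace (X j)"
      using N(1) insert.prems(5) by blast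
  qed
  have sc: "stat_compact (X j)" using insert.prems(1) by simp
  obtain N' where N': "N' \<subseteq> N" "infinite N'" "nonthin N'"
    "\<exists>a\<in>topspace (X j). stat_converges (X j) N' (\<lambda>m. x m j) a"
    using sc[unfolded stat_compact_def, rule_format, OF conjI[OF seq N(3)]] by blast
  have "\<forall>i\<in>insert j J. \<exists>a\<in>topspace (X i). stat_converges (X i) N' (\<lambda>m. x m i) a"
  proof
    fix i assume "i \<in> insert j J"
    then consider "i = j" | "i \<in> J" by blast
    then show "\<exists>a\<in>topspace (X i). stat_converges (X i) N' (\<lambda>m. x m i) a"
    proof cases
      case 1 then show ?thesis using N'(4) by simp
    next
      case 2
      then obtain a where a1: "a \<in> topspace (X i)" and a2: "stat_converges (X i) N (\<lambda>m. x m i) a"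
        using N(4) by blast
      have "stat_converges (X i) N' (\<lambda>m. x m i) a" by (rule stat_conv_sub[OF a2 N'(1) N'(3)])
      with a1 show ?thesis by (rule bexI[rotated])
    qed
  qed
  moreover have "N' \<subseteq> M" using N'(1) N(1) by (rule order_trans)
  ultimately show ?case using N'(2,3) by blast
qed

theorem mainTheorem13:
  fixes X :: "nat \<Rightarrow> 'a topology" and n :: nat
  assumes "\<And>i. i \<in> {1..n} \<Longrightarrow> stat_compact (X i)"
  shows "stat_compact (product_topology X {1..n})"
  unfolding stat_compact_def
proof (intro allI impI)
  fix M and x :: "nat \<Rightarrow> nat \<Rightarrow> 'a"
  assume H: "is_seq_in (product_topology X {1..n}) M x \<and> nonthin M"
  then have M: "M \<subseteq> {1..}" "infinite M" "nonthin M"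
    and xin: "\<And>m. m \<in> M \<Longrightarrow> x m \<in> (\<Pi>\<^sub>E i\<in>{1..n}. topspace (X i))"
    unfolding is_seq_in_def by auto
  obtain N where N: "N \<subseteq> M" "infinite N" "nonthin N"
    and C: "\<forall>i\<in>{1..n}. \<exists>a\<in>topspace (X i). stat_converges (X i) N (\<lambda>m. x m i) a"
    using coords[of "{1..n}" X M x] assms M xin by (auto simp: PiE_iff)
  obtain a where a: "\<forall>i\<in>{1..n}. a i \<in> topspace (X i) \<and> stat_converges (X i) N (\<lambda>m. x m i) (a i)"
    using C by metis
  define a' where "a' = restrict a {1..n}"
  have a'top: "a' \<in> topspace (product_topology X {1..n})"
    using a by (auto simp: a'_def)
  have "stat_converges (product_topology X {1..n}) N x a'"
    unfolding stat_converges_def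
  proof (intro conjI allI impI)
    show "nonthin N" by fact
    show "a' \<in> topspace (product_topology X {1..n})" by fact
    fix U assume U: "openin (product_topology X {1..n}) U \<and> a' \<in> U"
    then obtain V where V: "\<forall>i \<in> {1..n}. openin (X i) (V i)" "a' \<in> Pi\<^sub>E {1..n} V"
      "Pi\<^sub>E {1..n} V \<subseteq> U"
      unfolding openin_product_topology_alt by blast
    have sub: "{m\<in>N. x m \<notin> U} \<subseteq> (\<Union>i\<in>{1..n}. {m\<in>N. x m i \<notin> V i})"
    proof
      fix m assume m: "m \<in> {m\<in>N. x m \<notin> U}"
      show "m \<in> (\<Union>i\<in>{1..n}. {m\<in>N. x m i \<notin> V i})"
      proof (rule ccontr)
        assume "m \<notin> (\<Union>i\<in>{1..n}. {m\<in>N. x m i \<notin> V i})"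
        then have "\<forall>i\<in>{1..n}. x m i \<in> V i" using m by auto
        moreover have "x m \<in> extensional {1..n}" using xin m N by (auto simp: PiE_iff)
        ultimately have "x m \<in> Pi\<^sub>E {1..n} V" by (auto simp: PiE_iff)
        then show False using V m by auto
      qed
    qed
    have "has_density (\<Union>i\<in>{1..n}. {m\<in>N. x m i \<notin> V i}) 0"
    proof (rule dens0_UN)
      fix i assume i: "i \<in> {1..n}"
      have "a i \<in> V i" using V(2) i by (auto simp: a'_def PiE_iff)
      then show "has_density {m\<in>N. x m i \<notin> V i} 0"
        using a i V(1) unfolding stat_converges_def by auto
    qed simp
    then show "has_density {m\<in>N. x m \<notin> U} 0" using sub dens0_subset by blast
  qed
  then show "\<exists>N'\<subseteq>M. infinite N' \<and> nonthin N' \<and>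
       (\<exists>a\<in>topspace (product_topology X {1..n}). stat_converges (product_topology X {1..n}) N' x a)"
    using N a'top by blast
qed

end
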